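(* A CPTP map $\mathcal M:\mathbf L(\mathcal H_X\otimes\mathcal H_Y)\to\mathbf L(\mathcal H_A\otimes\mathcal H_B)$ belongs to $\mathrm{LOCC}^*$ if and only if it can be written as $\mathcal M=\sum_{a,b}\mathcal A_{a|b}\otimes\mathcal B_{b|a}$, where for each $b$ the family $\{\mathcal A_{a|b}\}_a$ is a quantum instrument $\mathbf L(\mathcal H_X)\to\mathbf L(\mathcal H_A)$ and for each $a$ the family $\{\mathcal B_{b|a}\}_b$ is a quantum instrument $\mathbf L(\mathcal H_Y)\to\mathbf L(\mathcal H_B)$ (finite index sets).
   Context: A quantum instrument with classical input $i$ is a family $\{\mathcal A_{o|i}\}_o$ of completely positive linear maps with $\sum_o\mathcal A_{o|i}$ trace preserving for each $i$. $\mathrm{LOCC}^*$ is the set of CPTP maps of the form $\sum_{i_A,i_B,o_A,o_B}p(i_A,i_B|o_A,o_B)\,\mathcal A_{o_A|i_A}\otimes\mathcal B_{o_B|i_B}$ with instruments $\{\mathcal A_{o_A|i_A}\}_{o_A}$ (on Alice's side, $\mathbf L(\mathcal H_X)\to\mathbf L(\mathcal H_A)$), $\{\mathcal B_{o_B|i_B}\}_{o_B}$ (Bob's side, $\mathbf L(\mathcal H_Y)\to\mathbf L(\mathcal H_B)$) and a conditional probability distribution $p(i_A,i_B|o_A,o_B)$ over finite sets. *)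

theory Defs
  imports Complex_Main
begin

text \<open>Finite-dimensional Hilbert spaces are modelled by finite index types; an operator
  in L(H) with H = C^'i is a complex matrix 'i => 'i => complex.\<close>

type_synonym 'i cmat = "'i \<Rightarrow> 'i \<Rightarrow> complex"

definition mtrace :: "('i::finite) cmat \<Rightarrow> complex" where
  "mtrace M = (\<Sum>i\<in>UNIV. M i i)"

definition psd_on :: "'i set \<Rightarrow> 'i cmat \<Rightarrow> bool" where
  "psd_on S M \<longleftrightarrow> (\<forall>v::'i \<Rightarrow> complex.
      (\<Sum>i\<in>S. \<Sum>j\<in>S. cnj (v i) * M i j * v j) \<in> \<real> \<and>
      0 \<le> Re (\<Sum>i\<in>S. \<Sum>j\<in>S. cnj (v i) * M i j * v j))"

definition clinear_map :: "('i cmat \<Rightarrow> 'j cmat) \<Rightarrow> bool" where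
  "clinear_map F \<longleftrightarrow> (\<forall>c M N. F (\<lambda>i j. c * M i j + N i j) = (\<lambda>a b. c * F M a b + F N a b))"

text \<open>Complete positivity: for every ancilla dimension n, id_{M_n} \<otimes> F maps positive
  operators to positive operators (block (k,l) of the output is F of block (k,l)).\<close>
definition completely_positive :: "(('i::finite) cmat \<Rightarrow> ('j::finite) cmat) \<Rightarrow> bool" where
  "completely_positive F \<longleftrightarrow> (\<forall>n::nat. \<forall>M :: (nat \<times> 'i) cmat.
     psd_on ({..<n} \<times> UNIV) M \<longrightarrow>
     psd_on ({..<n} \<times> UNIV) (\<lambda>(k,a) (l,b). F (\<lambda>x y. M (k,x) (l,y)) a b))"

definition trace_preserving :: "(('i::finite) cmat \<Rightarrow> ('j::finite) cmat) \<Rightarrow> bool" where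
  "trace_preserving F \<longleftrightarrow> (\<forall>M. mtrace (F M) = mtrace M)"

definition cp_map :: "(('i::finite) cmat \<Rightarrow> ('j::finite) cmat) \<Rightarrow> bool" where
  "cp_map F \<longleftrightarrow> clinear_map F \<and> completely_positive F"

definition cptp :: "(('i::finite) cmat \<Rightarrow> ('j::finite) cmat) \<Rightarrow> bool" where
  "cptp F \<longleftrightarrow> cp_map F \<and> trace_preserving F"

definition instrument :: "'o set \<Rightarrow> ('o \<Rightarrow> ('i::finite) cmat \<Rightarrow> ('j::finite) cmat) \<Rightarrow> bool" where
  "instrument Os A \<longleftrightarrow> finite Os \<and> (\<forall>k\<in>Os. cp_map (A k)) \<and>
     trace_preserving (\<lambda>M a b. \<Sum>k\<in>Os. A k M a b)"

definition munit :: "'i \<Rightarrow> 'i \<Rightarrow> 'i cmat" where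
  "munit x x' = (\<lambda>i j. if i = x \<and> j = x' then 1 else 0)"

text \<open>Tensor product of linear maps, defined as the linear extension of
  (A \<otimes> B)(E_{xx'} \<otimes> E_{yy'}) = A(E_{xx'}) \<otimes> B(E_{yy'}).\<close>
definition tensor_map ::
  "(('x::finite) cmat \<Rightarrow> 'a cmat) \<Rightarrow> (('y::finite) cmat \<Rightarrow> 'b cmat) \<Rightarrow> ('x \<times> 'y) cmat \<Rightarrow> ('a \<times> 'b) cmat" where
  "tensor_map A B M = (\<lambda>(a,b) (a',b'). \<Sum>x\<in>UNIV. \<Sum>x'\<in>UNIV. \<Sum>y\<in>UNIV. \<Sum>y'\<in>UNIV.
      M (x,y) (x',y') * A (munit x x') a a' * B (munit y y') b b')"

definition LOCC_star ::
  "((('x::finite) \<times> ('y::finite)) cmat \<Rightarrow> (('a::finite) \<times> ('b::finite)) cmat) \<Rightarrow> bool" where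
  "LOCC_star M \<longleftrightarrow> cptp M \<and>
    (\<exists>(IA::nat set) (IB::nat set) (OA::nat set) (OB::nat set)
       (p :: nat \<Rightarrow> nat \<Rightarrow> nat \<Rightarrow> nat \<Rightarrow> real)
       (A :: nat \<Rightarrow> nat \<Rightarrow> 'x cmat \<Rightarrow> 'a cmat) (B :: nat \<Rightarrow> nat \<Rightarrow> 'y cmat \<Rightarrow> 'b cmat).
       finite IA \<and> finite IB \<and> finite OA \<and> finite OB \<and>
       (\<forall>iA\<in>IA. instrument OA (\<lambda>oA. A oA iA)) \<and>
       (\<forall>iB\<in>IB. instrument OB (\<lambda>oB. B oB iB)) \<and>
       (\<forall>oA\<in>OA. \<forall>oB\<in>OB. (\<forall>iA\<in>IA. \<forall>iB\<in>IB. 0 \<le> p iA iB oA oB) \<and>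
            (\<Sum>iA\<in>IA. \<Sum>iB\<in>IB. p iA iB oA oB) = 1) \<and>
       M = (\<lambda>X u v. \<Sum>iA\<in>IA. \<Sum>iB\<in>IB. \<Sum>oA\<in>OA. \<Sum>oB\<in>OB.
              complex_of_real (p iA iB oA oB) * tensor_map (A oA iA) (B oB iB) X u v))"

end

theory Submission
  imports Defs "HOL-Library.Nat_Bijection"
begin

lemma psd_scale:
  assumes "psd_on S M" "0 \<le> s"
  shows "psd_on S (\<lambda>i j. complex_of_real s * M i j)"
  unfolding psd_on_def
proof
  fix v :: "_ \<Rightarrow> complex"
  let ?Q = "\<Sum>i\<in>S. \<Sum>j\<in>S. cnj (v i) * M i j * v j"
  have eq: "(\<Sum>i\<in>S. \<Sum>j\<in>S. cnj (v i) * (complex_of_real s * M i j) * v j) = complex_of_real s * ?Q"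
    by (simp add: sum_distrib_left mult_ac)
  have Q: "?Q \<in> \<real>" "0 \<le> Re ?Q" using assms(1) unfolding psd_on_def by auto
  show "(\<Sum>i\<in>S. \<Sum>j\<in>S. cnj (v i) * (complex_of_real s * M i j) * v j) \<in> \<real> \<and>
        0 \<le> Re (\<Sum>i\<in>S. \<Sum>j\<in>S. cnj (v i) * (complex_of_real s * M i j) * v j)"
    unfolding eq using Q assms(2) by (auto intro: Reals_mult)
qed

lemma cp_scale:
  fixes F :: "('i::finite) cmat \<Rightarrow> ('j::finite) cmat"
  assumes "cp_map F" "0 \<le> s"
  shows "cp_map (\<lambda>X i j. complex_of_real s * F X i j)"
proof -
  have lin: "clinear_map F" and cp: "completely_positive F" using assms(1) by (auto simp: cp_map_def)
  have "clinear_map (\<lambda>X i j. complex_of_real s * F X i j)"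
    using lin unfolding clinear_map_def by (simp add: algebra_simps)
  moreover have "completely_positive (\<lambda>X i j. complex_of_real s * F X i j)"
    unfolding completely_positive_def
  proof (intro allI impI)
    fix n :: nat and M :: "(nat \<times> 'i) cmat"
    assume "psd_on ({..<n} \<times> UNIV) M"
    then have "psd_on ({..<n} \<times> UNIV) (\<lambda>(k,a) (l,b). F (\<lambda>x y. M (k,x) (l,y)) a b)"
      using cp unfolding completely_positive_def by blast
    from psd_scale[OF this assms(2)]
    show "psd_on ({..<n} \<times> UNIV) (\<lambda>(k,a) (l,b). complex_of_real s * F (\<lambda>x y. M (k,x) (l,y)) a b)"
      by (simp add: case_prod_beta')
  qed
  ultimately show ?thesis by (simp add: cp_map_def)
qed

lemma tensor_scale:
  "tensor_map (\<lambda>X i j. c * A X i j) (\<lambda>X i j. d * B X i j) X u v = c * d * tensor_map A B X u v"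
  by (cases u; cases v) (simp add: tensor_map_def sum_distrib_left mult_ac)

lemma sum_enc:
  assumes "finite S" "finite T"
  shows "(\<Sum>a\<in>prod_encode ` (S \<times> T). f a) = (\<Sum>s\<in>S. \<Sum>t\<in>T. f (prod_encode (s,t)))"
  by (simp add: sum.reindex inj_prod_encode sum.cartesian_product)

lemma mtrace_id_nz: "mtrace (\<lambda>i j. if i = j then 1 else 0 :: complex) \<noteq> (0 :: complex)"
  by (simp add: mtrace_def)

theorem mainTheorem14:
  fixes M :: "(('x::finite) \<times> ('y::finite)) cmat \<Rightarrow> (('a::finite) \<times> ('b::finite)) cmat"
  assumes "cptp M"
  shows "LOCC_star M \<longleftrightarrow>
    (\<exists>(Ia::nat set) (Ib::nat set) (A :: nat \<Rightarrow> nat \<Rightarrow> 'x cmat \<Rightarrow> 'a cmat)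
        (B :: nat \<Rightarrow> nat \<Rightarrow> 'y cmat \<Rightarrow> 'b cmat).
       finite Ia \<and> finite Ib \<and>
       (\<forall>b\<in>Ib. instrument Ia (\<lambda>a. A a b)) \<and>
       (\<forall>a\<in>Ia. instrument Ib (\<lambda>b. B b a)) \<and>
       M = (\<lambda>X u v. \<Sum>a\<in>Ia. \<Sum>b\<in>Ib. tensor_map (A a b) (B b a) X u v))"
proof
  assume L: "LOCC_star M"
  then obtain IA IB OA OB and p :: "nat \<Rightarrow> nat \<Rightarrow> nat \<Rightarrow> nat \<Rightarrow> real"
    and A :: "nat \<Rightarrow> nat \<Rightarrow> 'x cmat \<Rightarrow> 'a cmat" and B :: "nat \<Rightarrow> nat \<Rightarrow> 'y cmat \<Rightarrow> 'b cmat" where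
    fin: "finite IA" "finite IB" "finite OA" "finite OB" and
    iA: "\<forall>iA\<in>IA. instrument OA (\<lambda>oA. A oA iA)" and
    iB: "\<forall>iB\<in>IB. instrument OB (\<lambda>oB. B oB iB)" and
    pp: "\<forall>oA\<in>OA. \<forall>oB\<in>OB. (\<forall>iA\<in>IA. \<forall>iB\<in>IB. 0 \<le> p iA iB oA oB) \<and>
            (\<Sum>iA\<in>IA. \<Sum>iB\<in>IB. p iA iB oA oB) = 1" and
    Meq: "M = (\<lambda>X u v. \<Sum>iA\<in>IA. \<Sum>iB\<in>IB. \<Sum>oA\<in>OA. \<Sum>oB\<in>OB.
              complex_of_real (p iA iB oA oB) * tensor_map (A oA iA) (B oB iB) X u v)"
    unfolding LOCC_star_def by blast
  have "IB \<noteq> {}"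
  proof
    assume "IB = {}"
    then have "M = (\<lambda>X u v. 0)" using Meq by simp
    moreover have "trace_preserving M" using assms by (simp add: cptp_def)
    ultimately have "\<forall>I. mtrace ((\<lambda>X u v. 0::complex) I :: ('a \<times> 'b) cmat) = mtrace (I :: ('x \<times> 'y) cmat)"
      unfolding trace_preserving_def by simp
    then have "mtrace ((\<lambda>u v. 0) :: ('a \<times> 'b) cmat) = mtrace ((\<lambda>i j. if i = j then 1 else 0) :: ('x \<times> 'y) cmat)"
      by blast
    then show False using mtrace_id_nz by (simp add: mtrace_def)
  qed
  then obtain iB0 where iB0: "iB0 \<in> IB" by blast
  define r where "r iA oA oB = (\<Sum>iB\<in>IB. p iA iB oA oB)" for iA oA oB
  define q where "q iB oA oB iA = (if r iA oA oB = 0 then (if iB = iB0 then 1 else 0)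
       else p iA iB oA oB / r iA oA oB)" for iB oA oB iA
  have r_nn: "0 \<le> r iA oA oB" if "iA \<in> IA" "oA \<in> OA" "oB \<in> OB" for iA oA oB
    unfolding r_def using pp that by (auto intro: sum_nonneg)
  have q_nn: "0 \<le> q iB oA oB iA" if "iA \<in> IA" "oA \<in> OA" "oB \<in> OB" "iB \<in> IB" for iB iA oA oB
    unfolding q_def using pp that r_nn[OF that(1-3)] by auto
  have q_sum: "(\<Sum>iB\<in>IB. q iB oA oB iA) = 1" if "iA \<in> IA" "oA \<in> OA" "oB \<in> OB" for iA oA oB
  proof (cases "r iA oA oB = 0")
    case True then show ?thesis unfolding q_def using iB0 fin by simp
  next
    case False then show ?thesis unfolding q_def
      by (simp add: sum_divide_distrib[symmetric] r_def)
  qed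
  have r_sum: "(\<Sum>iA\<in>IA. r iA oA oB) = 1" if "oA \<in> OA" "oB \<in> OB" for oA oB
    unfolding r_def using pp that by auto
  have qr: "q iB oA oB iA * r iA oA oB = p iA iB oA oB"
    if "iA \<in> IA" "oA \<in> OA" "oB \<in> OB" "iB \<in> IB" for iB iA oA oB
  proof (cases "r iA oA oB = 0")
    case True
    then have "\<forall>i\<in>IB. p iA i oA oB = 0" unfolding r_def
      using sum_nonneg_eq_0_iff[OF fin(2), of "\<lambda>i. p iA i oA oB"] pp that by auto
    then show ?thesis using True that by simp
  next
    case False then show ?thesis unfolding q_def by simp
  qed
  define Ia where "Ia = prod_encode ` (OA \<times> IB)"
  define Ib where "Ib = prod_encode ` (OB \<times> IA)"
  define A' where "A' a b = (\<lambda>X i j. complex_of_real (q (snd (prod_decode a)) (fst (prod_decode a))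
        (fst (prod_decode b)) (snd (prod_decode b))) * A (fst (prod_decode a)) (snd (prod_decode b)) X i j)"
    for a b
  define B' where "B' b a = (\<lambda>X i j. complex_of_real (r (snd (prod_decode b)) (fst (prod_decode a))
        (fst (prod_decode b))) * B (fst (prod_decode b)) (snd (prod_decode a)) X i j)"
    for a b
  have "finite Ia" "finite Ib" using fin by (auto simp: Ia_def Ib_def)
  moreover have "\<forall>b\<in>Ib. instrument Ia (\<lambda>a. A' a b)"
  proof
    fix b assume "b \<in> Ib"
    then obtain oB iA where b: "b = prod_encode (oB, iA)" "oB \<in> OB" "iA \<in> IA"
      unfolding Ib_def by auto
    have ins: "instrument OA (\<lambda>oA. A oA iA)" using iA b by blast
    have "finite Ia" using fin by (simp add: Ia_def)
    moreover have "\<forall>k\<in>Ia. cp_map (A' k b)"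
    proof
      fix k assume "k \<in> Ia"
      then obtain oA iB where k: "k = prod_encode (oA, iB)" "oA \<in> OA" "iB \<in> IB"
        unfolding Ia_def by auto
      show "cp_map (A' k b)" unfolding A'_def k b using k b ins
        by (auto intro!: cp_scale q_nn simp: instrument_def)
    qed
    moreover have "trace_preserving (\<lambda>M a c. \<Sum>k\<in>Ia. A' k b M a c)"
    proof -
      have "(\<lambda>M a c. \<Sum>k\<in>Ia. A' k b M a c) = (\<lambda>M a c. \<Sum>oA\<in>OA. A oA iA M a c)"
      proof (intro ext)
        fix X a c
        have "(\<Sum>k\<in>Ia. A' k b X a c) = (\<Sum>oA\<in>OA. \<Sum>iB\<in>IB.
            complex_of_real (q iB oA oB iA) * A oA iA X a c)"
          unfolding Ia_def using fin by (simp add: sum_enc A'_def b)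
        also have "\<dots> = (\<Sum>oA\<in>OA. complex_of_real (\<Sum>iB\<in>IB. q iB oA oB iA) * A oA iA X a c)"
          by (simp add: sum_distrib_right)
        also have "\<dots> = (\<Sum>oA\<in>OA. A oA iA X a c)"
          using q_sum b by simp
        finally show "(\<Sum>k\<in>Ia. A' k b X a c) = (\<Sum>oA\<in>OA. A oA iA X a c)" .
      qed
      then show ?thesis using ins by (simp add: instrument_def)
    qed
    ultimately show "instrument Ia (\<lambda>a. A' a b)" by (simp add: instrument_def)
  qed
  moreover have "\<forall>a\<in>Ia. instrument Ib (\<lambda>b. B' b a)"
  proof
    fix a assume "a \<in> Ia"
    then obtain oA iB where a: "a = prod_encode (oA, iB)" "oA \<in> OA" "iB \<in> IB"
      unfolding Ia_def by auto
    have ins: "instrument OB (\<lambda>oB. B oB iB)" using iB a by blast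
    have "finite Ib" using fin by (simp add: Ib_def)
    moreover have "\<forall>k\<in>Ib. cp_map (B' k a)"
    proof
      fix k assume "k \<in> Ib"
      then obtain oB iA where k: "k = prod_encode (oB, iA)" "oB \<in> OB" "iA \<in> IA"
        unfolding Ib_def by auto
      show "cp_map (B' k a)" unfolding B'_def k a using k a ins
        by (auto intro!: cp_scale r_nn simp: instrument_def)
    qed
    moreover have "trace_preserving (\<lambda>M x c. \<Sum>k\<in>Ib. B' k a M x c)"
    proof -
      have "(\<lambda>M x c. \<Sum>k\<in>Ib. B' k a M x c) = (\<lambda>M x c. \<Sum>oB\<in>OB. B oB iB M x c)"
      proof (intro ext)
        fix X x c
        have "(\<Sum>k\<in>Ib. B' k a X x c) = (\<Sum>oB\<in>OB. \<Sum>iA\<in>IA.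
            complex_of_real (r iA oA oB) * B oB iB X x c)"
          unfolding Ib_def using fin by (simp add: sum_enc B'_def a)
        also have "\<dots> = (\<Sum>oB\<in>OB. complex_of_real (\<Sum>iA\<in>IA. r iA oA oB) * B oB iB X x c)"
          by (simp add: sum_distrib_right)
        also have "\<dots> = (\<Sum>oB\<in>OB. B oB iB X x c)"
          using r_sum a by simp
        finally show "(\<Sum>k\<in>Ib. B' k a X x c) = (\<Sum>oB\<in>OB. B oB iB X x c)" .
      qed
      then show ?thesis using ins by (simp add: instrument_def)
    qed
    ultimately show "instrument Ib (\<lambda>b. B' b a)" by (simp add: instrument_def)
  qed
  moreover have "M = (\<lambda>X u v. \<Sum>a\<in>Ia. \<Sum>b\<in>Ib. tensor_map (A' a b) (B' b a) X u v)"
  proof (intro ext)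
    fix X u v
    let ?T = "\<lambda>iA iB oA oB. tensor_map (A oA iA) (B oB iB) X u v"
    have "(\<Sum>a\<in>Ia. \<Sum>b\<in>Ib. tensor_map (A' a b) (B' b a) X u v) =
       (\<Sum>oA\<in>OA. \<Sum>iB\<in>IB. \<Sum>oB\<in>OB. \<Sum>iA\<in>IA.
          complex_of_real (q iB oA oB iA) * complex_of_real (r iA oA oB) * ?T iA iB oA oB)"
      unfolding Ia_def Ib_def using fin by (simp add: sum_enc A'_def B'_def tensor_scale)
    also have "\<dots> = (\<Sum>oA\<in>OA. \<Sum>iB\<in>IB. \<Sum>oB\<in>OB. \<Sum>iA\<in>IA.
          complex_of_real (p iA iB oA oB) * ?T iA iB oA oB)"
      by (intro sum.cong refl) (simp add: qr flip: of_real_mult)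
    also have "\<dots> = (\<Sum>oA\<in>OA. \<Sum>iB\<in>IB. \<Sum>iA\<in>IA. \<Sum>oB\<in>OB.
          complex_of_real (p iA iB oA oB) * ?T iA iB oA oB)"
      by (rule sum.cong[OF refl], rule sum.cong[OF refl], rule sum.swap)
    also have "\<dots> = (\<Sum>oA\<in>OA. \<Sum>iA\<in>IA. \<Sum>iB\<in>IB. \<Sum>oB\<in>OB.
          complex_of_real (p iA iB oA oB) * ?T iA iB oA oB)"
      by (rule sum.cong[OF refl], rule sum.swap)
    also have "\<dots> = (\<Sum>iA\<in>IA. \<Sum>oA\<in>OA. \<Sum>iB\<in>IB. \<Sum>oB\<in>OB.
          complex_of_real (p iA iB oA oB) * ?T iA iB oA oB)"
      by (rule sum.swap)
    also have "\<dots> = (\<Sum>iA\<in>IA. \<Sum>iB\<in>IB. \<Sum>oA\<in>OA. \<Sum>oB\<in>OB.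
          complex_of_real (p iA iB oA oB) * ?T iA iB oA oB)"
      by (rule sum.cong[OF refl], rule sum.swap)
    finally show "M X u v = (\<Sum>a\<in>Ia. \<Sum>b\<in>Ib. tensor_map (A' a b) (B' b a) X u v)"
      using Meq by simp
  qed
  ultimately show "\<exists>(Ia::nat set) (Ib::nat set) (A :: nat \<Rightarrow> nat \<Rightarrow> 'x cmat \<Rightarrow> 'a cmat)
        (B :: nat \<Rightarrow> nat \<Rightarrow> 'y cmat \<Rightarrow> 'b cmat).
       finite Ia \<and> finite Ib \<and>
       (\<forall>b\<in>Ib. instrument Ia (\<lambda>a. A a b)) \<and>
       (\<forall>a\<in>Ia. instrument Ib (\<lambda>b. B b a)) \<and>
       M = (\<lambda>X u v. \<Sum>a\<in>Ia. \<Sum>b\<in>Ib. tensor_map (A a b) (B b a) X u v)"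
    by blast
next
  assume "\<exists>(Ia::nat set) (Ib::nat set) (A :: nat \<Rightarrow> nat \<Rightarrow> 'x cmat \<Rightarrow> 'a cmat)
        (B :: nat \<Rightarrow> nat \<Rightarrow> 'y cmat \<Rightarrow> 'b cmat).
       finite Ia \<and> finite Ib \<and>
       (\<forall>b\<in>Ib. instrument Ia (\<lambda>a. A a b)) \<and>
       (\<forall>a\<in>Ia. instrument Ib (\<lambda>b. B b a)) \<and>
       M = (\<lambda>X u v. \<Sum>a\<in>Ia. \<Sum>b\<in>Ib. tensor_map (A a b) (B b a) X u v)"
  then obtain Ia Ib and A :: "nat \<Rightarrow> nat \<Rightarrow> 'x cmat \<Rightarrow> 'a cmat" and B :: "nat \<Rightarrow> nat \<Rightarrow> 'y cmat \<Rightarrow> 'b cmat"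
    where fin: "finite Ia" "finite Ib" and iA: "\<forall>b\<in>Ib. instrument Ia (\<lambda>a. A a b)"
      and iB: "\<forall>a\<in>Ia. instrument Ib (\<lambda>b. B b a)"
      and Meq: "M = (\<lambda>X u v. \<Sum>a\<in>Ia. \<Sum>b\<in>Ib. tensor_map (A a b) (B b a) X u v)"
    by blast
  define p :: "nat \<Rightarrow> nat \<Rightarrow> nat \<Rightarrow> nat \<Rightarrow> real" where
    "p iA iB oA oB = (if iA = oB then (if iB = oA then 1 else 0) else 0)" for iA iB oA oB
  have psum: "(\<Sum>iA\<in>Ib. \<Sum>iB\<in>Ia. p iA iB oA oB) = 1" if "oA \<in> Ia" "oB \<in> Ib" for oA oB
  proof -
    have "(\<Sum>iB\<in>Ia. p iA iB oA oB) = (if iA = oB then 1 else 0)" for iA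
      using that fin by (cases "iA = oB") (simp_all add: p_def)
    then show ?thesis using that fin by simp
  qed
  have Meq2: "M = (\<lambda>X u v. \<Sum>iA\<in>Ib. \<Sum>iB\<in>Ia. \<Sum>oA\<in>Ia. \<Sum>oB\<in>Ib.
              complex_of_real (p iA iB oA oB) * tensor_map (A oA iA) (B oB iB) X u v)"
  proof (intro ext)
    fix X u v
    have "(\<Sum>iA\<in>Ib. \<Sum>iB\<in>Ia. \<Sum>oA\<in>Ia. \<Sum>oB\<in>Ib.
              complex_of_real (p iA iB oA oB) * tensor_map (A oA iA) (B oB iB) X u v)
        = (\<Sum>iA\<in>Ib. \<Sum>iB\<in>Ia. tensor_map (A iB iA) (B iA iB) X u v)"
    proof (rule sum.cong[OF refl], rule sum.cong[OF refl])
      fix iA iB assume mem: "iA \<in> Ib" "iB \<in> Ia"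
      have e: "complex_of_real (p iA iB oA oB) * tensor_map (A oA iA) (B oB iB) X u v =
          (if oB = iA then (if oA = iB then tensor_map (A oA iA) (B oB iB) X u v else 0) else 0)"
        for oA oB by (simp add: p_def)
      show "(\<Sum>oA\<in>Ia. \<Sum>oB\<in>Ib.
              complex_of_real (p iA iB oA oB) * tensor_map (A oA iA) (B oB iB) X u v) =
          tensor_map (A iB iA) (B iA iB) X u v"
        unfolding e using mem fin by simp
    qed
    also have "\<dots> = (\<Sum>a\<in>Ia. \<Sum>b\<in>Ib. tensor_map (A a b) (B b a) X u v)"
      by (rule sum.swap)
    finally show "M X u v = (\<Sum>iA\<in>Ib. \<Sum>iB\<in>Ia. \<Sum>oA\<in>Ia. \<Sum>oB\<in>Ib.
              complex_of_real (p iA iB oA oB) * tensor_map (A oA iA) (B oB iB) X u v)"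
      using Meq by simp
  qed
  have pnn: "0 \<le> p iA iB oA oB" for iA iB oA oB by (simp add: p_def)
  show "LOCC_star M"
    unfolding LOCC_star_def
    apply (rule conjI[OF assms])
    apply (rule exI[of _ Ib], rule exI[of _ Ia], rule exI[of _ Ia], rule exI[of _ Ib])
    apply (rule exI[of _ p], rule exI[of _ A], rule exI[of _ B])
    apply (intro conjI fin)
    subgoal using iA by blast
    subgoal using iB by blast
    subgoal using psum pnn by blast
    subgoal by (rule Meq2)
    done
qed

end
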